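(* Under the standing setup with $\mathrm{Var}(X_N)>0$, suppose contextual reinforcement holds: $\delta_W\cdot\delta_B\ge 0$. Then: (i) if $D_{ER}\ge D_{NM}$, then $0\le D_{NM}\le D\le\min\{D^+_{MOB},D_{ER}\}$; (ii) if $D_{ER}\le D_{NM}$, then $\max\{D^-_{MOB},D_{ER}\}\le D\le D_{NM}\le 0$; (iii) the bounds in (i) and (ii) are sharp under the assumption $\delta_W\delta_B\ge 0$ (absent additional information).
   Context: Let $(X,Y,N)$ be a random triple with $X\in\{0,1\}$, $Y$ real-valued, $N$ taking values in a finite set $\mathcal N$. Write $p_n=\Pr(N=n)$, $X_n=\mathbb E[X\mid N=n]$, $Y_n=\mathbb E[Y\mid N=n]$, $X_N=\mathbb E[X\mid N]$, $Y_N=\mathbb E[Y\mid N]$. Assume some $n$ has $p_n>0$ and $X_n\in(0,1)$, and fix reals $\underline Y\le\overline Y$ with $\mathbb E[Y\mid X=x,N=n]\in[\underline Y,\overline Y]$ whenever $\Pr(X=x,N=n)>0$. $D=\mathbb E[Y\mid X=1]-\mathbb E[Y\mid X=0]$; $\delta_B=\mathbb E[\mathrm{Cov}(Y,X\mid N)]$; $\delta_W=\mathbb E[\mathrm{Cov}(Y,X_N\mid X)]$; $D_{ER}=\mathrm{Cov}(Y_N,X_N)/\mathrm{Var}(X_N)$; $D_{NM}=\mathbb E[X_NY_N]/\mathbb E[X_N]-\mathbb E[(1-X_N)Y_N]/\mathbb E[1-X_N]$; $D^+_{MOB}=\big(\mathbb E[\min\{Y_N-\underline Y(1-X_N),\overline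 Y X_N\}]-\mathbb E[X]\mathbb E[Y]\big)/\mathrm{Var}(X)$, $D^-_{MOB}=\big(\mathbb E[Y](1-\mathbb E[X])-\mathbb E[\min\{Y_N-\underline Y X_N,\overline Y(1-X_N)\}]\big)/\mathrm{Var}(X)$. Sharpness under an assumption $\mathcal A$: the parameter lies in the interval for every joint distribution satisfying the standing assumptions and $\mathcal A$, and every value in the interval is attained by some joint distribution of $(X,Y,N)$ with the same observed $(p_n,X_n,Y_n)_n$, satisfying the standing bound and $\mathcal A$. *)

theory Defs
  imports "HOL-Probability.Probability"
begin

text \<open>The joint law of (X,Y,N) is a probability measure on bool \<times> real \<times> 'n,
  with X = True meaning X = 1. All quantities below depend only on this law.\<close>

type_synonym 'n outcome = "bool \<times> real \<times> 'n"

definition Xv :: "'n outcome \<Rightarrow> real" where "Xv w = (if fst w then 1 else 0)"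
definition Yv :: "'n outcome \<Rightarrow> real" where "Yv w = fst (snd w)"
definition Nv :: "'n outcome \<Rightarrow> 'n" where "Nv w = snd (snd w)"

definition ex :: "'a measure \<Rightarrow> ('a \<Rightarrow> real) \<Rightarrow> real" where
  "ex P f = (\<integral>w. f w \<partial>P)"

text \<open>Conditional expectation given an event: E[f 1_A]/Pr(A) (0 if Pr(A) = 0).\<close>
definition cexp :: "'a measure \<Rightarrow> ('a \<Rightarrow> real) \<Rightarrow> 'a set \<Rightarrow> real" where
  "cexp P f A = (\<integral>w. indicator A w * f w \<partial>P) / measure P A"

definition var :: "'a measure \<Rightarrow> ('a \<Rightarrow> real) \<Rightarrow> real" where
  "var P f = ex P (\<lambda>w. (f w - ex P f)\<^sup>2)"

definition cov :: "'a measure \<Rightarrow> ('a \<Rightarrow> real) \<Rightarrow> ('a \<Rightarrow> real) \<Rightarrow> real" where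
  "cov P f g = ex P (\<lambda>w. (f w - ex P f) * (g w - ex P g))"

definition ccov :: "'a measure \<Rightarrow> ('a \<Rightarrow> real) \<Rightarrow> ('a \<Rightarrow> real) \<Rightarrow> 'a set \<Rightarrow> real" where
  "ccov P f g A = cexp P (\<lambda>w. (f w - cexp P f A) * (g w - cexp P g A)) A"

definition pN :: "'n outcome measure \<Rightarrow> 'n \<Rightarrow> real" where
  "pN P n = measure P {w. Nv w = n}"
definition XN :: "'n outcome measure \<Rightarrow> 'n \<Rightarrow> real" where
  "XN P n = cexp P Xv {w. Nv w = n}"
definition YN :: "'n outcome measure \<Rightarrow> 'n \<Rightarrow> real" where
  "YN P n = cexp P Yv {w. Nv w = n}"

definition XNrv :: "'n outcome measure \<Rightarrow> 'n outcome \<Rightarrow> real" where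
  "XNrv P w = XN P (Nv w)"
definition YNrv :: "'n outcome measure \<Rightarrow> 'n outcome \<Rightarrow> real" where
  "YNrv P w = YN P (Nv w)"

definition joint_law :: "('n::finite) outcome measure \<Rightarrow> bool" where
  "joint_law P \<longleftrightarrow> prob_space P \<and>
     sets P = sets (count_space UNIV \<Otimes>\<^sub>M (borel \<Otimes>\<^sub>M count_space UNIV)) \<and>
     integrable P Yv"

definition cond_mean_bounds :: "'n outcome measure \<Rightarrow> real \<Rightarrow> real \<Rightarrow> bool" where
  "cond_mean_bounds P yl yh \<longleftrightarrow>
     (\<forall>x n. measure P {w. fst w = x \<and> Nv w = n} > 0 \<longrightarrow>
        yl \<le> cexp P Yv {w. fst w = x \<and> Nv w = n} \<and>
        cexp P Yv {w. fst w = x \<and> Nv w = n} \<le> yh)"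

definition same_observed :: "'n outcome measure \<Rightarrow> 'n outcome measure \<Rightarrow> bool" where
  "same_observed P Q \<longleftrightarrow> (\<forall>n. pN Q n = pN P n \<and> XN Q n = XN P n \<and> YN Q n = YN P n)"

definition Dgap :: "'n outcome measure \<Rightarrow> real" where
  "Dgap P = cexp P Yv {w. fst w} - cexp P Yv {w. \<not> fst w}"

definition deltaB :: "('n::finite) outcome measure \<Rightarrow> real" where
  "deltaB P = (\<Sum>n\<in>UNIV. pN P n * ccov P Yv Xv {w. Nv w = n})"
definition deltaW :: "'n outcome measure \<Rightarrow> real" where
  "deltaW P = (\<Sum>x\<in>UNIV. measure P {w. fst w = x} * ccov P Yv (XNrv P) {w. fst w = x})"

definition DER :: "'n outcome measure \<Rightarrow> real" where
  "DER P = cov P (YNrv P) (XNrv P) / var P (XNrv P)"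

definition DNM :: "'n outcome measure \<Rightarrow> real" where
  "DNM P = ex P (\<lambda>w. XNrv P w * YNrv P w) / ex P (XNrv P)
         - ex P (\<lambda>w. (1 - XNrv P w) * YNrv P w) / ex P (\<lambda>w. 1 - XNrv P w)"

definition DMOBp :: "'n outcome measure \<Rightarrow> real \<Rightarrow> real \<Rightarrow> real" where
  "DMOBp P yl yh = (ex P (\<lambda>w. min (YNrv P w - yl * (1 - XNrv P w)) (yh * XNrv P w))
                    - ex P Xv * ex P Yv) / var P Xv"

definition DMOBm :: "'n outcome measure \<Rightarrow> real \<Rightarrow> real \<Rightarrow> real" where
  "DMOBm P yl yh = (ex P Yv * (1 - ex P Xv)
                    - ex P (\<lambda>w. min (YNrv P w - yl * XNrv P w) (yh * (1 - XNrv P w)))) / var P Xv"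

end

theory Submission
  imports Defs
begin


abbreviation "MM \<equiv> (count_space UNIV \<Otimes>\<^sub>M (borel \<Otimes>\<^sub>M count_space UNIV)) :: ('n::finite) outcome measure"

lemma law_sets: "joint_law P \<Longrightarrow> sets P = sets MM" by (simp add: joint_law_def)
lemma law_space: "joint_law P \<Longrightarrow> space P = UNIV"
  using sets_eq_imp_space_eq[OF law_sets] by (simp add: space_pair_measure)

lemma meas_MM: "(\<lambda>w. g (fst w) (Nv w) :: real) \<in> borel_measurable (MM::('n::finite) outcome measure)"
proof -
  have f1: "fst \<in> measurable (MM::('n::finite) outcome measure) (count_space UNIV)" by simp
  have f2: "Nv \<in> measurable (MM::('n::finite) outcome measure) (count_space UNIV)"
    unfolding Nv_def by simp
  show ?thesis
    apply (rule measurable_compose_countable'[where g=fst and I=UNIV and f="\<lambda>x w. g x (Nv w)"])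
    apply (rule measurable_compose_countable'[where g=Nv and I=UNIV and f="\<lambda>n w. g _ n"])
    using f1 f2 by auto
qed

lemma meas_P: "joint_law P \<Longrightarrow> (\<lambda>w. g (fst w) (Nv w) :: real) \<in> borel_measurable P"
  using meas_MM measurable_cong_sets[OF law_sets refl] by blast

lemma cell_sets: "joint_law P \<Longrightarrow> {w. fst w = x \<and> Nv w = n} \<in> sets P"
proof -
  assume L: "joint_law P"
  have "(\<lambda>w. if fst w = x \<and> Nv w = n then 1 else 0 :: real) \<in> borel_measurable P"
    using meas_P[OF L, of "\<lambda>x' n'. if x' = x \<and> n' = n then 1 else 0"] by simp
  from measurable_sets[OF this, of "{1}"]
  have "(\<lambda>w. if fst w = x \<and> Nv w = n then 1 else 0 :: real) -` {1} \<inter> space P \<in> sets P" by simp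
  moreover have "(\<lambda>w. if fst w = x \<and> Nv w = n then 1 else 0 :: real) -` {1} \<inter> space P = {w. fst w = x \<and> Nv w = n}"
    using law_space[OF L] by (auto split: if_splits)
  ultimately show ?thesis by simp
qed

definition qc :: "('n::finite) outcome measure \<Rightarrow> bool \<Rightarrow> 'n \<Rightarrow> real" where
  "qc P x n = measure P {w. fst w = x \<and> Nv w = n}"
definition sc :: "('n::finite) outcome measure \<Rightarrow> bool \<Rightarrow> 'n \<Rightarrow> real" where
  "sc P x n = (\<integral>w. indicator {w. fst w = x \<and> Nv w = n} w * Yv w \<partial>P)"

lemma law_prob: "joint_law P \<Longrightarrow> prob_space P" by (simp add: joint_law_def)

lemma cell_decomp: fixes g :: "bool \<Rightarrow> 'n::finite \<Rightarrow> real" shows "g (fst w) (Nv w) = (\<Sum>x\<in>UNIV. \<Sum>n\<in>UNIV. g x n * indicator {w. fst w = x \<and> Nv w = n} w)"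
proof -
  have "\<And>x. (\<Sum>n\<in>UNIV. g x n * indicator {w. fst w = x \<and> Nv w = n} w)
      = (\<Sum>n\<in>UNIV. if n = Nv w then (if x = fst w then g x n else 0) else 0)"
    by (intro sum.cong refl) (auto simp: indicator_def)
  also have "\<And>x. (\<Sum>n\<in>UNIV. if n = Nv w then (if x = fst w then g x n else 0) else 0) = (if x = fst w then g x (Nv w) else 0)"
    by (simp add: sum.delta)
  finally have "(\<Sum>x\<in>UNIV. \<Sum>n\<in>UNIV. g x n * indicator {w. fst w = x \<and> Nv w = n} w)
     = (\<Sum>x\<in>UNIV. if x = fst w then g x (Nv w) else 0)" by (intro sum.cong) auto
  also have "\<dots> = g (fst w) (Nv w)" by (simp add: sum.delta)
  finally show ?thesis by simp
qed

lemma red: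
  assumes L: "joint_law P"
  shows "ex P (\<lambda>w. f (fst w) (Nv w) * Yv w + g (fst w) (Nv w))
     = (\<Sum>x\<in>UNIV. \<Sum>n\<in>UNIV. f x n * sc P x n + g x n * qc P x n)"
proof -
  interpret prob_space P using law_prob[OF L] .
  have Yi: "integrable P Yv" using L by (simp add: joint_law_def)
  have cs: "\<And>x n. {w. fst w = x \<and> Nv w = n} \<in> sets P" using cell_sets[OF L] .
  have i1: "\<And>x n. integrable P (\<lambda>w. indicator {w. fst w = x \<and> Nv w = n} w * Yv w)"
    using integrable_mult_indicator[OF cs Yi] by simp
  have i2: "\<And>x n. integrable P (\<lambda>w. indicator {w. fst w = x \<and> Nv w = n} w :: real)"
    using cs by (intro integrable_real_indicator) (auto simp: emeasure_eq_measure)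
  have eq: "(\<lambda>w. f (fst w) (Nv w) * Yv w + g (fst w) (Nv w)) =
     (\<lambda>w. \<Sum>x\<in>UNIV. \<Sum>n\<in>UNIV. f x n * (indicator {w. fst w = x \<and> Nv w = n} w * Yv w)
          + g x n * indicator {w. fst w = x \<and> Nv w = n} w)"
  proof
    fix w
    show "f (fst w) (Nv w) * Yv w + g (fst w) (Nv w) = (\<Sum>x\<in>UNIV. \<Sum>n\<in>UNIV. f x n * (indicator {w. fst w = x \<and> Nv w = n} w * Yv w)
          + g x n * indicator {w. fst w = x \<and> Nv w = n} w)"
    proof -
      have "(\<Sum>x\<in>UNIV. \<Sum>n\<in>UNIV. f x n * (indicator {w. fst w = x \<and> Nv w = n} w * Yv w)
          + g x n * indicator {w. fst w = x \<and> Nv w = n} w) = 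
          (\<Sum>x\<in>UNIV. \<Sum>n\<in>UNIV. f x n * indicator {w. fst w = x \<and> Nv w = n} w) * Yv w
          + (\<Sum>x\<in>UNIV. \<Sum>n\<in>UNIV. g x n * indicator {w. fst w = x \<and> Nv w = n} w)"
        by (simp only: sum.distrib sum_distrib_right mult.assoc)
      then show ?thesis by (simp only: cell_decomp[symmetric])
    qed
  qed
  let ?F = "\<lambda>x n w. f x n * (indicator {w. fst w = x \<and> Nv w = n} w * Yv w)
          + g x n * indicator {w. fst w = x \<and> Nv w = n} w"
  have iF: "\<And>x n. integrable P (?F x n)" using i1 i2 by auto
  have e1: "\<And>x n. integral\<^sup>L P (?F x n) = f x n * sc P x n + g x n * qc P x n"
    using i1 i2 law_space[OF L] by (simp add: sc_def qc_def)
  have e2: "integral\<^sup>L P (\<lambda>w. \<Sum>n\<in>UNIV. ?F x n w) = (\<Sum>n\<in>UNIV. integral\<^sup>L P (?F x n))" for x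
    using Bochner_Integration.integral_sum[where I=UNIV and M=P and f="?F x"] iF by blast
  have e3: "integral\<^sup>L P (\<lambda>w. \<Sum>x\<in>UNIV. \<Sum>n\<in>UNIV. ?F x n w) = (\<Sum>x\<in>UNIV. integral\<^sup>L P (\<lambda>w. \<Sum>n\<in>UNIV. ?F x n w))"
    using Bochner_Integration.integral_sum[where I=UNIV and M=P and f="\<lambda>x w. \<Sum>n\<in>UNIV. ?F x n w"] iF by auto
  show ?thesis unfolding ex_def eq e3 e2 e1 ..
qed

lemma ex_cell: "joint_law P \<Longrightarrow> ex P (\<lambda>w. g (fst w) (Nv w)) = (\<Sum>x\<in>UNIV. \<Sum>n\<in>UNIV. g x n * qc P x n)"
  using red[of P "\<lambda>_ _. 0" g] by simp

lemma sc_null: assumes L: "joint_law P" and q: "qc P x n = 0" shows "sc P x n = 0"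
proof -
  interpret prob_space P using law_prob[OF L] .
  have "{w. fst w = x \<and> Nv w = n} \<in> null_sets P"
    using q cell_sets[OF L] by (simp add: qc_def emeasure_eq_measure null_sets_def)
  from AE_not_in[OF this] show ?thesis unfolding sc_def
    by (intro integral_eq_zero_AE) (auto elim!: AE_mp)
qed

lemma sum_bool: "(\<Sum>x\<in>UNIV. h x) = h True + h False"
  by (simp add: UNIV_bool add.commute)

lemma ex_red: "joint_law P \<Longrightarrow> (\<And>w. h w = f (fst w) (Nv w) * Yv w + g (fst w) (Nv w)) \<Longrightarrow>
   ex P h = (\<Sum>n\<in>UNIV. f True n * sc P True n + g True n * qc P True n + (f False n * sc P False n + g False n * qc P False n))"
proof -
  assume L: "joint_law P" and h: "\<And>w. h w = f (fst w) (Nv w) * Yv w + g (fst w) (Nv w)"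
  have "h = (\<lambda>w. f (fst w) (Nv w) * Yv w + g (fst w) (Nv w))" using h by auto
  then show ?thesis using red[OF L, of f g] by (simp add: sum_bool sum.distrib)
qed

lemma ex_cellh: "joint_law P \<Longrightarrow> (\<And>w. h w = g (fst w) (Nv w)) \<Longrightarrow>
   ex P h = (\<Sum>n\<in>UNIV. g True n * qc P True n + g False n * qc P False n)"
  using ex_red[of P h "\<lambda>_ _. 0" g] by simp

lemma meas_red: "joint_law P \<Longrightarrow> measure P {w. Q (fst w) (Nv w)} =
   (\<Sum>n\<in>UNIV. (if Q True n then qc P True n else 0) + (if Q False n then qc P False n else 0))"
proof -
  assume L: "joint_law P"
  have "measure P {w. Q (fst w) (Nv w)} = ex P (indicator {w. Q (fst w) (Nv w)})"
    using law_space[OF L] by (simp add: ex_def)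
  also have "\<dots> = (\<Sum>n\<in>UNIV. (if Q True n then 1 else 0) * qc P True n + (if Q False n then 1 else 0) * qc P False n)"
    by (rule ex_cellh[OF L]) (simp add: indicator_def)
  finally show ?thesis by (auto intro!: sum.cong)
qed

lemma cexp_red: "joint_law P \<Longrightarrow> (\<And>w. h w = f (fst w) (Nv w) * Yv w + g (fst w) (Nv w)) \<Longrightarrow>
   cexp P h {w. Q (fst w) (Nv w)} =
   (\<Sum>n\<in>UNIV. (if Q True n then f True n * sc P True n + g True n * qc P True n else 0)
      + (if Q False n then f False n * sc P False n + g False n * qc P False n else 0))
   / (\<Sum>n\<in>UNIV. (if Q True n then qc P True n else 0) + (if Q False n then qc P False n else 0))"
proof -
  assume L: "joint_law P" and h: "\<And>w. h w = f (fst w) (Nv w) * Yv w + g (fst w) (Nv w)"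
  have "ex P (\<lambda>w. indicator {w. Q (fst w) (Nv w)} w * h w) = 
     (\<Sum>n\<in>UNIV. (if Q True n then f True n else 0) * sc P True n + (if Q True n then g True n else 0) * qc P True n
       + ((if Q False n then f False n else 0) * sc P False n + (if Q False n then g False n else 0) * qc P False n))"
    by (rule ex_red[OF L]) (simp add: indicator_def h)
  also have "\<dots> = (\<Sum>n\<in>UNIV. (if Q True n then f True n * sc P True n + g True n * qc P True n else 0)
      + (if Q False n then f False n * sc P False n + g False n * qc P False n else 0))"
    by (auto intro!: sum.cong)
  finally show ?thesis unfolding cexp_def ex_def[symmetric] meas_red[OF L] by simp
qed

lemma pN_ev: "joint_law P \<Longrightarrow> pN P n = qc P True n + qc P False n"
  unfolding pN_def using meas_red[of P "\<lambda>x n'. n' = n"] by (simp add: sum.distrib)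

lemma XN_ev: "joint_law P \<Longrightarrow> XN P n = qc P True n / (qc P True n + qc P False n)"
  unfolding XN_def using cexp_red[of P Xv "\<lambda>_ _. 0" "\<lambda>x _. if x then 1 else 0" "\<lambda>x n'. n' = n"]
  by (simp add: sum.distrib Xv_def)

lemma YN_ev: "joint_law P \<Longrightarrow> YN P n = (sc P True n + sc P False n) / (qc P True n + qc P False n)"
  unfolding YN_def using cexp_red[of P Yv "\<lambda>_ _. 1" "\<lambda>_ _. 0" "\<lambda>x n'. n' = n"]
  by (simp add: sum.distrib)

lemma exX_ev: "joint_law P \<Longrightarrow> ex P Xv = (\<Sum>n\<in>UNIV. qc P True n)"
  using ex_cellh[of P Xv "\<lambda>x _. if x then 1 else 0"] by (simp add: Xv_def)

lemma exY_ev: "joint_law P \<Longrightarrow> ex P Yv = (\<Sum>n\<in>UNIV. sc P True n + sc P False n)"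
  using ex_red[of P Yv "\<lambda>_ _. 1" "\<lambda>_ _. 0"] by simp

lemma tot_ev: "joint_law P \<Longrightarrow> (\<Sum>n\<in>UNIV. qc P True n + qc P False n) = 1"
proof -
  assume L: "joint_law P"
  interpret prob_space P using law_prob[OF L] .
  have "measure P {w. True} = 1" using law_space[OF L] prob_space by simp
  then show ?thesis using meas_red[OF L, of "\<lambda>_ _. True"] by simp
qed

lemma m1_ev: "joint_law P \<Longrightarrow> measure P {w. fst w} = (\<Sum>n\<in>UNIV. qc P True n)"
  using meas_red[of P "\<lambda>x _. x"] by simp
lemma m0_ev: "joint_law P \<Longrightarrow> measure P {w. \<not> fst w} = (\<Sum>n\<in>UNIV. qc P False n)"
  using meas_red[of P "\<lambda>x _. \<not> x"] by simp

lemma c1_ev: "joint_law P \<Longrightarrow> cexp P Yv {w. fst w} = (\<Sum>n\<in>UNIV. sc P True n) / (\<Sum>n\<in>UNIV. qc P True n)"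
  using cexp_red[of P Yv "\<lambda>_ _. 1" "\<lambda>_ _. 0" "\<lambda>x _. x"] by simp
lemma c0_ev: "joint_law P \<Longrightarrow> cexp P Yv {w. \<not> fst w} = (\<Sum>n\<in>UNIV. sc P False n) / (\<Sum>n\<in>UNIV. qc P False n)"
  using cexp_red[of P Yv "\<lambda>_ _. 1" "\<lambda>_ _. 0" "\<lambda>x _. \<not> x"] by simp

lemma cell_ev: "joint_law P \<Longrightarrow> cexp P Yv {w. fst w = x \<and> Nv w = n} = sc P x n / qc P x n"
  using cexp_red[of P Yv "\<lambda>_ _. 1" "\<lambda>_ _. 0" "\<lambda>x' n'. x' = x \<and> n' = n"]
  by (cases x) (simp_all add: sum.distrib qc_def)

lemma exN_ev: "joint_law P \<Longrightarrow> ex P (\<lambda>w. g (Nv w)) = (\<Sum>n\<in>UNIV. (qc P True n + qc P False n) * g n)"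
  using ex_cellh[of P "\<lambda>w. g (Nv w)" "\<lambda>_ n. g n"] by (simp add: algebra_simps)

lemma ccovB_ev: "joint_law P \<Longrightarrow> ccov P Yv Xv {w. Nv w = n} =
  ((1 - XN P n) * (sc P True n - YN P n * qc P True n) + (0 - XN P n) * (sc P False n - YN P n * qc P False n))
   / (qc P True n + qc P False n)"
proof -
  assume L: "joint_law P"
  have eq: "ccov P Yv Xv {w. Nv w = n} = cexp P (\<lambda>w. (Yv w - YN P n) * (Xv w - XN P n)) {w. Nv w = n}"
    by (simp add: ccov_def YN_def XN_def)
  show ?thesis unfolding eq
    using cexp_red[OF L, of "\<lambda>w. (Yv w - YN P n) * (Xv w - XN P n)" "\<lambda>x _. (if x then 1 else 0) - XN P n"
       "\<lambda>x _. - YN P n * ((if x then 1 else 0) - XN P n)" "\<lambda>x n'. n' = n"]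
    by (simp add: sum.distrib Xv_def algebra_simps)
qed

lemma ccovW1_ev: "joint_law P \<Longrightarrow> ccov P Yv (XNrv P) {w. fst w} =
  (\<Sum>n\<in>UNIV. (XN P n - cexp P (XNrv P) {w. fst w}) * (sc P True n - cexp P Yv {w. fst w} * qc P True n))
   / (\<Sum>n\<in>UNIV. qc P True n)"
  unfolding ccov_def
  using cexp_red[of P "\<lambda>w. (Yv w - cexp P Yv {w. fst w}) * (XNrv P w - cexp P (XNrv P) {w. fst w})"
       "\<lambda>_ n. XN P n - cexp P (XNrv P) {w. fst w}"
       "\<lambda>_ n. - cexp P Yv {w. fst w} * (XN P n - cexp P (XNrv P) {w. fst w})" "\<lambda>x _. x"]
  by (simp add: XNrv_def algebra_simps)

lemma ccovW0_ev: "joint_law P \<Longrightarrow> ccov P Yv (XNrv P) {w. \<not> fst w} =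
  (\<Sum>n\<in>UNIV. (XN P n - cexp P (XNrv P) {w. \<not> fst w}) * (sc P False n - cexp P Yv {w. \<not> fst w} * qc P False n))
   / (\<Sum>n\<in>UNIV. qc P False n)"
  unfolding ccov_def
  using cexp_red[of P "\<lambda>w. (Yv w - cexp P Yv {w. \<not> fst w}) * (XNrv P w - cexp P (XNrv P) {w. \<not> fst w})"
       "\<lambda>_ n. XN P n - cexp P (XNrv P) {w. \<not> fst w}"
       "\<lambda>_ n. - cexp P Yv {w. \<not> fst w} * (XN P n - cexp P (XNrv P) {w. \<not> fst w})" "\<lambda>x _. \<not> x"]
  by (simp add: XNrv_def algebra_simps)

lemma c2T_ev: "joint_law P \<Longrightarrow> cexp P (XNrv P) {w. fst w} = (\<Sum>n\<in>UNIV. XN P n * qc P True n) / (\<Sum>n\<in>UNIV. qc P True n)"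
  using cexp_red[of P "XNrv P" "\<lambda>_ _. 0" "\<lambda>_ n. XN P n" "\<lambda>x _. x"] by (simp add: XNrv_def)
lemma c2F_ev: "joint_law P \<Longrightarrow> cexp P (XNrv P) {w. \<not> fst w} = (\<Sum>n\<in>UNIV. XN P n * qc P False n) / (\<Sum>n\<in>UNIV. qc P False n)"
  using cexp_red[of P "XNrv P" "\<lambda>_ _. 0" "\<lambda>_ n. XN P n" "\<lambda>x _. \<not> x"] by (simp add: XNrv_def)

lemma deltaW_ev: "joint_law P \<Longrightarrow> deltaW P = measure P {w. fst w} * ccov P Yv (XNrv P) {w. fst w}
   + measure P {w. \<not> fst w} * ccov P Yv (XNrv P) {w. \<not> fst w}"
  unfolding deltaW_def by (simp add: sum_bool)

lemma qc_nonneg: "qc P x n \<ge> 0" by (simp add: qc_def)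

lemma pX: "joint_law P \<Longrightarrow> (qc P True n + qc P False n) * XN P n = qc P True n"
  using qc_nonneg[of P True n] qc_nonneg[of P False n] by (auto simp: XN_ev)

lemma pY: "joint_law P \<Longrightarrow> (qc P True n + qc P False n) * YN P n = sc P True n + sc P False n"
proof -
  assume L: "joint_law P"
  show ?thesis
  proof (cases "qc P True n + qc P False n = 0")
    case True
    then have "qc P True n = 0" "qc P False n = 0" using qc_nonneg[of P True n] qc_nonneg[of P False n] by auto
    then show ?thesis using sc_null[OF L] True by simp
  qed (simp add: YN_ev[OF L])
qed

lemma var_X: assumes L: "joint_law P"
  shows "var P Xv = (\<Sum>n\<in>UNIV. qc P True n) * (1 - (\<Sum>n\<in>UNIV. qc P True n))"
proof -
  let ?e = "\<Sum>n\<in>UNIV. qc P True n"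
  have tb: "(\<Sum>n\<in>UNIV. qc P False n) = 1 - ?e" using tot_ev[OF L] by (simp add: sum.distrib)
  have "var P Xv = (\<Sum>n\<in>UNIV. (1 - ?e)^2 * qc P True n + (0 - ?e)^2 * qc P False n)"
    unfolding var_def exX_ev[OF L]
    using ex_cellh[OF L, where g="\<lambda>x _. ((if x then 1 else 0) - ?e)^2" and h="\<lambda>w. (Xv w - ?e)^2"] by (simp add: Xv_def)
  also have "\<dots> = (1 - ?e)^2 * ?e + ?e^2 * (1 - ?e)"
    by (simp add: sum.distrib sum_distrib_left[symmetric] tb)
  also have "\<dots> = ?e * (1 - ?e)" by (simp add: power2_eq_square algebra_simps)
  finally show ?thesis .
qed

lemma exXN: assumes L: "joint_law P" shows "ex P (XNrv P) = (\<Sum>n\<in>UNIV. qc P True n)"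
  unfolding XNrv_def exN_ev[OF L] pX[OF L] ..

lemma exYN: assumes L: "joint_law P" shows "ex P (YNrv P) = (\<Sum>n\<in>UNIV. sc P True n + sc P False n)"
  unfolding YNrv_def exN_ev[OF L] pY[OF L] ..

lemma var_XN: assumes L: "joint_law P"
  shows "var P (XNrv P) = (\<Sum>n\<in>UNIV. qc P True n * XN P n) - (\<Sum>n\<in>UNIV. qc P True n)^2"
proof -
  let ?e = "\<Sum>n\<in>UNIV. qc P True n"
  let ?p = "\<lambda>n. qc P True n + qc P False n"
  have t: "(\<Sum>n\<in>UNIV. ?p n) = 1" using tot_ev[OF L] .
  have "var P (XNrv P) = (\<Sum>n\<in>UNIV. ?p n * (XN P n - ?e)^2)"
    unfolding var_def exXN[OF L] unfolding XNrv_def using exN_ev[OF L, of "\<lambda>n. (XN P n - ?e)^2"] by simp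
  also have "\<dots> = (\<Sum>n\<in>UNIV. (?p n * XN P n) * XN P n - 2 * ?e * (?p n * XN P n) + ?e^2 * ?p n)"
    by (intro sum.cong refl) (simp add: power2_eq_square algebra_simps)
  also have "\<dots> = (\<Sum>n\<in>UNIV. qc P True n * XN P n) - 2 * ?e * ?e + ?e^2 * (\<Sum>n\<in>UNIV. ?p n)"
    unfolding pX[OF L] by (simp add: sum.distrib sum_subtractf sum_distrib_left[symmetric])
  also have "\<dots> = (\<Sum>n\<in>UNIV. qc P True n * XN P n) - ?e^2" unfolding t by (simp add: power2_eq_square)
  finally show ?thesis .
qed

definition "eP P = (\<Sum>n\<in>UNIV. qc P True n)"
definition "EYP P = (\<Sum>n\<in>UNIV. sc P True n + sc P False n)"
definition "S1P P = (\<Sum>n\<in>UNIV. sc P True n)"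
definition "AYP P = (\<Sum>n\<in>UNIV. qc P True n * YN P n)"
definition "A1P P = (\<Sum>n\<in>UNIV. qc P True n * XN P n)"

lemma cov_ev: assumes L: "joint_law P"
  shows "cov P (YNrv P) (XNrv P) = AYP P - eP P * EYP P"
proof -
  let ?e = "eP P" and ?E = "EYP P"
  let ?p = "\<lambda>n. qc P True n + qc P False n"
  have t: "(\<Sum>n\<in>UNIV. ?p n) = 1" using tot_ev[OF L] .
  have "cov P (YNrv P) (XNrv P) = (\<Sum>n\<in>UNIV. ?p n * ((YN P n - ?E) * (XN P n - ?e)))"
    unfolding cov_def exXN[OF L] exYN[OF L] eP_def[symmetric] EYP_def[symmetric]
    unfolding XNrv_def YNrv_def using exN_ev[OF L, of "\<lambda>n. (YN P n - ?E) * (XN P n - ?e)"] by simp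
  also have "\<dots> = (\<Sum>n\<in>UNIV. (?p n * XN P n) * YN P n - ?E * (?p n * XN P n) - ?e * (?p n * YN P n) + ?e * ?E * ?p n)"
    by (intro sum.cong refl) (simp add: algebra_simps)
  also have "\<dots> = (\<Sum>n\<in>UNIV. (?p n * XN P n) * YN P n) - ?E * (\<Sum>n\<in>UNIV. ?p n * XN P n)
      - ?e * (\<Sum>n\<in>UNIV. ?p n * YN P n) + ?e * ?E * (\<Sum>n\<in>UNIV. ?p n)"
    by (simp only: sum.distrib sum_subtractf sum_distrib_left[symmetric])
  also have "\<dots> = AYP P - ?E * ?e - ?e * ?E + ?e * ?E"
    unfolding pX[OF L] pY[OF L] t by (simp add: AYP_def eP_def EYP_def)
  finally show ?thesis by simp
qed

lemma DNM_ev: assumes L: "joint_law P" and e0: "0 < eP P" and e1: "eP P < 1"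
  shows "DNM P = (AYP P - eP P * EYP P) / (eP P * (1 - eP P))"
proof -
  let ?p = "\<lambda>n. qc P True n + qc P False n"
  have t: "(\<Sum>n\<in>UNIV. ?p n) = 1" using tot_ev[OF L] .
  have h1: "ex P (\<lambda>w. XNrv P w * YNrv P w) = AYP P"
    unfolding XNrv_def YNrv_def exN_ev[OF L, of "\<lambda>n. XN P n * YN P n"] AYP_def
    by (intro sum.cong refl) (metis pX[OF L] mult.assoc)
  have h2: "ex P (\<lambda>w. (1 - XNrv P w) * YNrv P w) = EYP P - AYP P"
  proof -
    have "ex P (\<lambda>w. (1 - XNrv P w) * YNrv P w) = (\<Sum>n\<in>UNIV. ?p n * YN P n - (?p n * XN P n) * YN P n)"
      unfolding XNrv_def YNrv_def exN_ev[OF L, of "\<lambda>n. (1 - XN P n) * YN P n"]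
      by (intro sum.cong refl) (simp add: algebra_simps)
    then show ?thesis unfolding pX[OF L] pY[OF L] EYP_def AYP_def by (simp add: sum_subtractf)
  qed
  have h3: "ex P (\<lambda>w. 1 - XNrv P w) = 1 - eP P"
  proof -
    have "ex P (\<lambda>w. 1 - XNrv P w) = (\<Sum>n\<in>UNIV. ?p n - ?p n * XN P n)"
      unfolding XNrv_def exN_ev[OF L, of "\<lambda>n. 1 - XN P n"]
      by (intro sum.cong refl) (simp add: algebra_simps)
    then show ?thesis unfolding pX[OF L] eP_def sum_subtractf t by simp
  qed
  show ?thesis unfolding DNM_def h1 h2 h3 exXN[OF L] eP_def[symmetric] using e0 e1
    by (simp add: field_simps)
qed

lemma Dgap_ev: assumes L: "joint_law P" and e0: "0 < eP P" and e1: "eP P < 1"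
  shows "Dgap P = (S1P P - eP P * EYP P) / (eP P * (1 - eP P))"
proof -
  have tb: "(\<Sum>n\<in>UNIV. qc P False n) = 1 - eP P" using tot_ev[OF L] by (simp add: sum.distrib eP_def)
  have s0: "(\<Sum>n\<in>UNIV. sc P False n) = EYP P - S1P P" by (simp add: EYP_def S1P_def sum.distrib)
  show ?thesis unfolding Dgap_def c1_ev[OF L] c0_ev[OF L] eP_def[symmetric] S1P_def[symmetric] tb s0
    using e0 e1 by (simp add: field_simps)
qed

lemma deltaB_ev: assumes L: "joint_law P"
  shows "deltaB P = S1P P - AYP P"
proof -
  have "\<And>n. pN P n * ccov P Yv Xv {w. Nv w = n} = sc P True n - qc P True n * YN P n"
  proof -
    fix n
    show "pN P n * ccov P Yv Xv {w. Nv w = n} = sc P True n - qc P True n * YN P n"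
    proof (cases "qc P True n + qc P False n = 0")
      case True
      then have "qc P True n = 0" "qc P False n = 0" using qc_nonneg[of P True n] qc_nonneg[of P False n] by auto
      then show ?thesis using sc_null[OF L] by (simp add: pN_ev[OF L])
    next
      case False
      have "pN P n * ccov P Yv Xv {w. Nv w = n} = 
        (1 - XN P n) * (sc P True n - YN P n * qc P True n) + (0 - XN P n) * (sc P False n - YN P n * qc P False n)"
        unfolding ccovB_ev[OF L] pN_ev[OF L] using False by simp
      also have "\<dots> = sc P True n - YN P n * qc P True n - XN P n * (sc P True n + sc P False n)
          + XN P n * YN P n * (qc P True n + qc P False n)" by (simp add: algebra_simps)
      also have "\<dots> = sc P True n - qc P True n * YN P n"
        unfolding pY[OF L, symmetric] by (simp add: algebra_simps)
      finally show ?thesis .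
    qed
  qed
  then show ?thesis unfolding deltaB_def S1P_def AYP_def by (simp add: sum_subtractf)
qed

lemma side_alg:
  fixes q s X :: "'n::finite \<Rightarrow> real"
  assumes m: "(\<Sum>n\<in>UNIV. q n) \<noteq> 0"
  shows "(\<Sum>n\<in>UNIV. q n) * ((\<Sum>n\<in>UNIV. (X n - (\<Sum>n\<in>UNIV. X n * q n) / (\<Sum>n\<in>UNIV. q n))
      * (s n - (\<Sum>n\<in>UNIV. s n) / (\<Sum>n\<in>UNIV. q n) * q n)) / (\<Sum>n\<in>UNIV. q n))
    = (\<Sum>n\<in>UNIV. X n * s n) - (\<Sum>n\<in>UNIV. s n) * (\<Sum>n\<in>UNIV. X n * q n) / (\<Sum>n\<in>UNIV. q n)"
proof -
  define M where "M = (\<Sum>n\<in>UNIV. q n)"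
  define c1 where "c1 = (\<Sum>n\<in>UNIV. s n) / M"
  define c2 where "c2 = (\<Sum>n\<in>UNIV. X n * q n) / M"
  have "(\<Sum>n\<in>UNIV. (X n - c2) * (s n - c1 * q n)) =
      (\<Sum>n\<in>UNIV. X n * s n - c2 * s n - c1 * (X n * q n) + (c1 * c2) * q n)"
    by (intro sum.cong refl) (simp add: algebra_simps)
  also have "\<dots> = (\<Sum>n\<in>UNIV. X n * s n) - c2 * (\<Sum>n\<in>UNIV. s n) - c1 * (\<Sum>n\<in>UNIV. X n * q n) + (c1 * c2) * M"
    unfolding M_def by (simp only: sum.distrib sum_subtractf sum_distrib_left[symmetric])
  also have "\<dots> = (\<Sum>n\<in>UNIV. X n * s n) - (\<Sum>n\<in>UNIV. s n) * (\<Sum>n\<in>UNIV. X n * q n) / M"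
    using m unfolding c1_def c2_def M_def[symmetric] by (simp add: field_simps)
  finally have eq: "(\<Sum>n\<in>UNIV. (X n - c2) * (s n - c1 * q n)) = (\<Sum>n\<in>UNIV. X n * s n) - (\<Sum>n\<in>UNIV. s n) * (\<Sum>n\<in>UNIV. X n * q n) / M" .
  have "M * ((\<Sum>n\<in>UNIV. (X n - c2) * (s n - c1 * q n)) / M) = (\<Sum>n\<in>UNIV. X n * s n) - (\<Sum>n\<in>UNIV. s n) * (\<Sum>n\<in>UNIV. X n * q n) / M"
    using m eq unfolding M_def[symmetric] by simp
  then show ?thesis unfolding M_def c1_def c2_def .
qed

lemma deltaW_ev2: assumes L: "joint_law P" and e0: "0 < eP P" and e1: "eP P < 1"
  shows "deltaW P = (AYP P - eP P * EYP P) - Dgap P * (A1P P - (eP P)^2)"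
proof -
  let ?e = "eP P"
  have tb: "(\<Sum>n\<in>UNIV. qc P False n) = 1 - eP P" using tot_ev[OF L] by (simp add: sum.distrib eP_def)
  have s0: "(\<Sum>n\<in>UNIV. sc P False n) = EYP P - S1P P" by (simp add: EYP_def S1P_def sum.distrib)
  have A0: "(\<Sum>n\<in>UNIV. XN P n * qc P False n) = ?e - A1P P"
  proof -
    have "(\<Sum>n\<in>UNIV. XN P n * qc P False n) = (\<Sum>n\<in>UNIV. (qc P True n + qc P False n) * XN P n - qc P True n * XN P n)"
      by (intro sum.cong refl) (simp add: algebra_simps)
    then show ?thesis unfolding pX[OF L] by (simp add: sum_subtractf eP_def A1P_def)
  qed
  have AY: "AYP P = (\<Sum>n\<in>UNIV. XN P n * sc P True n) + (\<Sum>n\<in>UNIV. XN P n * sc P False n)"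
  proof -
    have "\<And>n. qc P True n * YN P n = XN P n * (sc P True n + sc P False n)"
      using pX[OF L] pY[OF L] by (metis mult.assoc mult.commute)
    then show ?thesis unfolding AYP_def by (simp add: sum.distrib[symmetric] algebra_simps)
  qed
  have w1: "measure P {w. fst w} * ccov P Yv (XNrv P) {w. fst w} =
     (\<Sum>n\<in>UNIV. XN P n * sc P True n) - S1P P * A1P P / ?e"
    unfolding ccovW1_ev[OF L] c1_ev[OF L] c2T_ev[OF L] m1_ev[OF L]
    using side_alg[of "qc P True" "XN P" "sc P True"] e0 unfolding eP_def S1P_def A1P_def
    by (simp add: mult.commute)
  have w0: "measure P {w. \<not> fst w} * ccov P Yv (XNrv P) {w. \<not> fst w} =
     (\<Sum>n\<in>UNIV. XN P n * sc P False n) - (EYP P - S1P P) * (?e - A1P P) / (1 - ?e)"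
    unfolding ccovW0_ev[OF L] c0_ev[OF L] c2F_ev[OF L] m0_ev[OF L]
    using side_alg[of "qc P False" "XN P" "sc P False"] e1 unfolding tb s0 A0
    by simp
  show ?thesis unfolding deltaW_ev[OF L] w1 w0 Dgap_ev[OF L e0 e1] AY using e0 e1
    by (simp add: field_simps power2_eq_square)
qed

lemma DER_ev: assumes L: "joint_law P"
  shows "DER P = (AYP P - eP P * EYP P) / (A1P P - (eP P)^2)"
  unfolding DER_def cov_ev[OF L] var_XN[OF L] eP_def A1P_def ..

lemma DMOBp_ev: assumes L: "joint_law P" shows "DMOBp P yl yh =
  ((\<Sum>n\<in>UNIV. (qc P True n + qc P False n) * min (YN P n - yl * (1 - XN P n)) (yh * XN P n)) - eP P * EYP P)
   / (eP P * (1 - eP P))"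
  unfolding DMOBp_def var_X[OF L] exX_ev[OF L] exY_ev[OF L] eP_def[symmetric] EYP_def[symmetric]
  unfolding XNrv_def YNrv_def exN_ev[OF L, of "\<lambda>n. min (YN P n - yl * (1 - XN P n)) (yh * XN P n)"] ..

lemma DMOBm_ev: assumes L: "joint_law P" shows "DMOBm P yl yh =
  (EYP P * (1 - eP P) - (\<Sum>n\<in>UNIV. (qc P True n + qc P False n) * min (YN P n - yl * XN P n) (yh * (1 - XN P n))))
   / (eP P * (1 - eP P))"
  unfolding DMOBm_def var_X[OF L] exX_ev[OF L] exY_ev[OF L] eP_def[symmetric] EYP_def[symmetric]
  unfolding XNrv_def YNrv_def exN_ev[OF L, of "\<lambda>n. min (YN P n - yl * XN P n) (yh * (1 - XN P n))"] ..




lemma bounds_sc: assumes L: "joint_law P" and B: "cond_mean_bounds P yl yh"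
  shows "yl * qc P x n \<le> sc P x n \<and> sc P x n \<le> yh * qc P x n"
proof (cases "qc P x n = 0")
  case True then show ?thesis using sc_null[OF L] by simp
next
  case False
  then have q: "qc P x n > 0" using qc_nonneg[of P x n] by simp
  then have "yl \<le> cexp P Yv {w. fst w = x \<and> Nv w = n} \<and> cexp P Yv {w. fst w = x \<and> Nv w = n} \<le> yh"
    using B unfolding cond_mean_bounds_def qc_def by blast
  then have "yl \<le> sc P x n / qc P x n \<and> sc P x n / qc P x n \<le> yh"
    using cell_ev[OF L] by simp
  then show ?thesis using q by (simp add: field_simps mult.commute)
qed

lemma bounds_back: assumes L: "joint_law Q" and B: "\<And>x n. yl * qc Q x n \<le> sc Q x n \<and> sc Q x n \<le> yh * qc Q x n"
  shows "cond_mean_bounds Q yl yh"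
  unfolding cond_mean_bounds_def
proof (intro allI impI)
  fix x n assume "0 < measure Q {w. fst w = x \<and> Nv w = n}"
  then have q: "qc Q x n > 0" by (simp add: qc_def)
  show "yl \<le> cexp Q Yv {w. fst w = x \<and> Nv w = n} \<and> cexp Q Yv {w. fst w = x \<and> Nv w = n} \<le> yh"
    unfolding cell_ev[OF L] using B[of x n] q by (simp add: field_simps mult.commute)
qed

lemma construct:
  assumes L: "joint_law P" and t0: "\<And>x n. qc P x n = 0 \<Longrightarrow> t x n = 0"
  shows "\<exists>Q. joint_law Q \<and> qc Q = qc P \<and> sc Q = t"
proof -
  interpret prob_space P using law_prob[OF L] .
  define mu where "mu x n = t x n / qc P x n" for x n
  define phi :: "'a outcome \<Rightarrow> 'a outcome" where "phi w = (fst w, mu (fst w) (Nv w), Nv w)" for w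
  have fstm: "fst \<in> measurable (MM::'a outcome measure) (count_space UNIV)" by simp
  have Nvm: "Nv \<in> measurable (MM::'a outcome measure) (count_space UNIV)" unfolding Nv_def by simp
  have phim: "phi \<in> measurable MM MM" unfolding phi_def
    by (intro measurable_Pair fstm Nvm meas_MM)
  have phiP: "phi \<in> measurable P MM" using phim measurable_cong_sets[OF law_sets[OF L] refl] by blast
  define Q where "Q = distr P MM phi"
  have sQ: "sets Q = sets MM" unfolding Q_def by simp
  have pQ: "prob_space Q" unfolding Q_def by (rule prob_space_distr[OF phiP])
  have Ym: "Yv \<in> borel_measurable (MM::'a outcome measure)" unfolding Yv_def by simp
  have cs: "\<And>x n. {w. fst w = x \<and> Nv w = n} \<in> sets (MM::'a outcome measure)"
    using cell_sets[OF L] law_sets[OF L] by simp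
  have pre: "\<And>x n. phi -` {w. fst w = x \<and> Nv w = n} = {w. fst w = x \<and> Nv w = n}"
    by (auto simp: phi_def Nv_def)
  have Yphi: "\<And>w. Yv (phi w) = mu (fst w) (Nv w)" by (simp add: phi_def Yv_def)
  have iY: "integrable P (\<lambda>w. mu (fst w) (Nv w))"
  proof -
    have "(\<lambda>w. mu (fst w) (Nv w)) = (\<lambda>w. \<Sum>x\<in>UNIV. \<Sum>n\<in>UNIV. mu x n * indicator {w. fst w = x \<and> Nv w = n} w)"
      using cell_decomp[of mu] by auto
    moreover have "integrable P (\<lambda>w. \<Sum>x\<in>UNIV. \<Sum>n\<in>UNIV. mu x n * indicator {w. fst w = x \<and> Nv w = n} w)"
      using cell_sets[OF L] by (intro Bochner_Integration.integrable_sum Bochner_Integration.integrable_mult_right integrable_real_indicator) (auto simp: emeasure_eq_measure)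
    ultimately show ?thesis by simp
  qed
  have LQ: "joint_law Q" unfolding joint_law_def
    using pQ sQ iY integrable_distr_eq[OF phiP Ym] Yphi unfolding Q_def by simp
  have qQ: "qc Q = qc P"
  proof (intro ext)
    fix x n show "qc Q x n = qc P x n"
      unfolding qc_def Q_def measure_distr[OF phiP cs] pre using law_space[OF L] by simp
  qed
  have sQ2: "sc Q = t"
  proof (intro ext)
    fix x n
    have m: "(\<lambda>w. indicator {w. fst w = x \<and> Nv w = n} w * Yv w) \<in> borel_measurable (MM::'a outcome measure)"
      using cs Ym by (intro borel_measurable_times borel_measurable_indicator) auto
    have "sc Q x n = (\<integral>w. indicator {w. fst w = x \<and> Nv w = n} (phi w) * Yv (phi w) \<partial>P)"
      unfolding sc_def Q_def by (rule integral_distr[OF phiP m])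
    also have "\<dots> = (\<integral>w. mu x n * indicator {w. fst w = x \<and> Nv w = n} w \<partial>P)"
    proof (intro Bochner_Integration.integral_cong refl)
      fix w
      show "indicator {w. fst w = x \<and> Nv w = n} (phi w) * Yv (phi w) = mu x n * indicator {w. fst w = x \<and> Nv w = n} w"
      proof (cases "fst w = x \<and> Nv w = n")
        case True
        then show ?thesis by (simp add: phi_def Yv_def Nv_def indicator_def)
      next
        case False
        then have "\<not> (fst (phi w) = x \<and> Nv (phi w) = n)" by (simp add: phi_def Nv_def)
        then show ?thesis using False by simp
      qed
    qed
    also have "\<dots> = mu x n * qc P x n" using law_space[OF L] by (simp add: qc_def)
    also have "\<dots> = t x n" using t0[of x n] by (cases "qc P x n = 0") (auto simp: mu_def)
    finally show "sc Q x n = t x n" .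
  qed
  show ?thesis using LQ qQ sQ2 by blast
qed

definition feas :: "real \<Rightarrow> real \<Rightarrow> real \<Rightarrow> real \<Rightarrow> real \<Rightarrow> real \<Rightarrow> bool" where
  "feas yl yh a b S f \<longleftrightarrow> yl * a \<le> f \<and> f \<le> yh * a \<and> yl * b \<le> S - f \<and> S - f \<le> yh * b"

lemma feas_n:
  fixes a b s1 s0 yl yh :: real
  assumes a: "a \<ge> 0" and b: "b \<ge> 0" and y: "yl \<le> yh"
    and s1: "yl * a \<le> s1" "s1 \<le> yh * a" and s0: "yl * b \<le> s0" "s0 \<le> yh * b"
  defines "X \<equiv> a / (a + b)" and "Y \<equiv> (s1 + s0) / (a + b)"
  shows "feas yl yh a b (s1 + s0) (a * Y)"
    and "feas yl yh a b (s1 + s0) ((a + b) * min (Y - yl * (1 - X)) (yh * X))"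
    and "feas yl yh a b (s1 + s0) ((s1 + s0) - (a + b) * min (Y - yl * X) (yh * (1 - X)))"
    and "s1 \<le> (a + b) * min (Y - yl * (1 - X)) (yh * X)"
    and "(s1 + s0) - (a + b) * min (Y - yl * X) (yh * (1 - X)) \<le> s1"
proof -
  have "(a + b = 0 \<and> a = 0 \<and> b = 0 \<and> s1 = 0 \<and> s0 = 0) \<or> a + b > 0"
  proof (cases "a + b > 0")
    case False then have "a = 0" "b = 0" using a b by auto
    then show ?thesis using s1 s0 by auto
  qed simp
  then have all: "feas yl yh a b (s1 + s0) (a * Y) \<and>
    feas yl yh a b (s1 + s0) ((a + b) * min (Y - yl * (1 - X)) (yh * X)) \<and>
    feas yl yh a b (s1 + s0) ((s1 + s0) - (a + b) * min (Y - yl * X) (yh * (1 - X))) \<and>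
    s1 \<le> (a + b) * min (Y - yl * (1 - X)) (yh * X) \<and>
    (s1 + s0) - (a + b) * min (Y - yl * X) (yh * (1 - X)) \<le> s1"
  proof
    assume "a + b = 0 \<and> a = 0 \<and> b = 0 \<and> s1 = 0 \<and> s0 = 0"
    then show ?thesis by (simp add: feas_def X_def Y_def)
  next
    assume p: "a + b > 0"
    have pX: "(a + b) * X = a" using p by (simp add: X_def)
    have pY: "(a + b) * Y = s1 + s0" using p by (simp add: Y_def)
    have k1: "(a + b) * (Y - yl * (1 - X)) = (a + b) * Y - yl * ((a + b) - (a + b) * X)" by (simp add: algebra_simps)
    have k2: "(a + b) * (Y - yl * X) = (a + b) * Y - yl * ((a + b) * X)" by (simp add: algebra_simps)
    have k3: "(a + b) * (yh * X) = yh * ((a + b) * X)" by (simp add: algebra_simps)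
    have k4: "(a + b) * (yh * (1 - X)) = yh * ((a + b) - (a + b) * X)" by (simp add: algebra_simps)
    have m1: "(a + b) * min (Y - yl * (1 - X)) (yh * X) = min (s1 + s0 - yl * b) (yh * a)"
      using p unfolding min_mult_distrib_left k1 k3 pX pY by simp
    have m2: "(a + b) * min (Y - yl * X) (yh * (1 - X)) = min (s1 + s0 - yl * a) (yh * b)"
      using p unfolding min_mult_distrib_left k2 k4 pX pY by simp
    have Yb: "yl \<le> Y \<and> Y \<le> yh" using p s1 s0 unfolding Y_def
      by (simp add: field_simps)
    have aY: "yl * a \<le> a * Y \<and> a * Y \<le> yh * a"
      using Yb a mult_left_mono[of yl Y a] mult_left_mono[of Y yh a] by (simp add: mult.commute)
    have bY: "(s1 + s0) - a * Y = b * Y" using pY by (simp add: algebra_simps)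
    have bY2: "yl * b \<le> b * Y \<and> b * Y \<le> yh * b"
      using Yb b mult_left_mono[of yl Y b] mult_left_mono[of Y yh b] by (simp add: mult.commute)
    have ya: "yl * a \<le> yh * a" "yl * b \<le> yh * b" using y a b by (simp_all add: mult_right_mono)
    show ?thesis unfolding m1 m2 feas_def using aY bY bY2 ya s1 s0 by (simp add: min_def)
  qed
  then show "feas yl yh a b (s1 + s0) (a * Y)"
    and "feas yl yh a b (s1 + s0) ((a + b) * min (Y - yl * (1 - X)) (yh * X))"
    and "feas yl yh a b (s1 + s0) ((s1 + s0) - (a + b) * min (Y - yl * X) (yh * (1 - X)))"
    and "s1 \<le> (a + b) * min (Y - yl * (1 - X)) (yh * X)"
    and "(s1 + s0) - (a + b) * min (Y - yl * X) (yh * (1 - X)) \<le> s1" by auto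
qed

lemma conv_le: fixes l u v lam :: real
  assumes "l \<le> u" "l \<le> v" "0 \<le> lam" "lam \<le> 1" shows "l \<le> lam * u + (1 - lam) * v"
proof -
  have "lam * l \<le> lam * u" using assms by (simp add: mult_left_mono)
  moreover have "(1 - lam) * l \<le> (1 - lam) * v" using assms by (simp add: mult_left_mono)
  ultimately show ?thesis by (simp add: algebra_simps)
qed

lemma conv_ge: fixes l u v lam :: real
  assumes "u \<le> l" "v \<le> l" "0 \<le> lam" "lam \<le> 1" shows "lam * u + (1 - lam) * v \<le> l"
proof -
  have "lam * u \<le> lam * l" using assms by (simp add: mult_left_mono)
  moreover have "(1 - lam) * v \<le> (1 - lam) * l" using assms by (simp add: mult_left_mono)
  ultimately show ?thesis by (simp add: algebra_simps)
qed

lemma feas_conv: assumes "feas yl yh a b S f" "feas yl yh a b S g" "0 \<le> lam" "lam \<le> 1"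
  shows "feas yl yh a b S (lam * g + (1 - lam) * f)"
proof -
  have e: "S - (lam * g + (1 - lam) * f) = lam * (S - g) + (1 - lam) * (S - f)" by (simp add: algebra_simps)
  show ?thesis using assms unfolding feas_def e
    by (intro conjI conv_le conv_ge) auto
qed

lemma interp:
  assumes L: "joint_law P"
    and F1: "\<And>n. feas yl yh (qc P True n) (qc P False n) (sc P True n + sc P False n) (f1 n)"
    and F2: "\<And>n. feas yl yh (qc P True n) (qc P False n) (sc P True n + sc P False n) (f2 n)"
    and T1: "(\<Sum>n\<in>UNIV. f1 n) \<le> T" and T2: "T \<le> (\<Sum>n\<in>UNIV. f2 n)"
  shows "\<exists>Q. joint_law Q \<and> qc Q = qc P \<and> (\<forall>n. sc Q True n + sc Q False n = sc P True n + sc P False n)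
     \<and> S1P Q = T \<and> cond_mean_bounds Q yl yh"
proof -
  define A where "A = (\<Sum>n\<in>UNIV. f1 n)"
  define B where "B = (\<Sum>n\<in>UNIV. f2 n)"
  define lam where "lam = (if B = A then 0 else (T - A) / (B - A))"
  have l0: "0 \<le> lam" "lam \<le> 1" using T1 T2 unfolding lam_def A_def[symmetric] B_def[symmetric]
    by (auto simp: field_simps)
  define t1 where "t1 n = lam * f2 n + (1 - lam) * f1 n" for n
  have Ft: "\<And>n. feas yl yh (qc P True n) (qc P False n) (sc P True n + sc P False n) (t1 n)"
    unfolding t1_def using F1 F2 l0 by (intro feas_conv) auto
  have St: "(\<Sum>n\<in>UNIV. t1 n) = T"
  proof -
    have "(\<Sum>n\<in>UNIV. t1 n) = lam * B + (1 - lam) * A"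
      unfolding t1_def A_def B_def by (simp add: sum.distrib sum_distrib_left)
    also have "\<dots> = T" using T1 T2 unfolding lam_def A_def[symmetric] B_def[symmetric]
      by (auto simp: field_simps)
    finally show ?thesis .
  qed
  define t where "t x n = (if x then t1 n else sc P True n + sc P False n - t1 n)" for x n
  have tz: "\<And>x n. qc P x n = 0 \<Longrightarrow> t x n = 0"
  proof -
    fix x n assume q: "qc P x n = 0"
    show "t x n = 0" using Ft[of n] q unfolding feas_def t_def by (cases x) auto
  qed
  obtain Q where Q: "joint_law Q" "qc Q = qc P" "sc Q = t" using construct[OF L, of t] tz by blast
  have "cond_mean_bounds Q yl yh"
  proof (rule bounds_back[OF Q(1)])
    fix x n show "yl * qc Q x n \<le> sc Q x n \<and> sc Q x n \<le> yh * qc Q x n"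
      using Ft[of n] unfolding Q(2) Q(3) feas_def t_def by (cases x) auto
  qed
  moreover have "\<forall>n. sc Q True n + sc Q False n = sc P True n + sc P False n" unfolding Q(3) t_def by simp
  moreover have "S1P Q = T" unfolding S1P_def Q(3) t_def using St by simp
  ultimately show ?thesis using Q by blast
qed

lemma alg_i: fixes V W C D dB dW :: real
  assumes V: "V > 0" and W: "W > 0" "W < V" and hD: "D * V = C + dB" and hW: "dW = C - D * W"
    and pr: "0 \<le> dW * dB" and C: "0 \<le> C"
  shows "C / V \<le> D \<and> D \<le> C / W"
proof -
  have B: "0 \<le> dB"
  proof (rule ccontr)
    assume "\<not> 0 \<le> dB"
    then have n: "dB < 0" by simp
    then have "dW \<le> 0" using pr by (auto simp add: zero_le_mult_iff)
    then have "C \<le> D * W" using hW by simp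
    then have "0 \<le> D * W" using C by simp
    then have "D \<ge> 0" using W by (simp add: zero_le_mult_iff)
    then have "D * W \<le> D * V" using W by (simp add: mult_left_mono)
    then show False using hD n \<open>C \<le> D * W\<close> by simp
  qed
  have Wp: "0 \<le> dW"
  proof (rule ccontr)
    assume "\<not> 0 \<le> dW"
    then have n: "dW < 0" by simp
    then have "dB \<le> 0" using pr by (auto simp add: zero_le_mult_iff)
    then have "D * V \<le> C" using hD by simp
    have "C < D * W" using hW n by simp
    then have "0 < D * W" using C by simp
    then have "D > 0" using W by (simp add: zero_less_mult_iff)
    then have "D * W < D * V" using W by simp
    then show False using \<open>D * V \<le> C\<close> \<open>C < D * W\<close> by simp
  qed
  show ?thesis using B Wp hD hW V W by (simp add: field_simps)
qed

lemma C_sign1: fixes V W C :: real assumes "0 < W" "W < V" "C / V \<le> C / W" shows "0 \<le> C"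
proof (rule ccontr)
  assume "\<not> 0 \<le> C"
  then have "C * V < C * W" using assms by simp
  then have "C / W < C / V" using assms by (simp add: field_simps)
  then show False using assms by simp
qed

lemma C_sign2: fixes V W C :: real assumes "0 < W" "W < V" "C / W \<le> C / V" shows "C \<le> 0"
  using C_sign1[of W V "-C"] assms by simp

lemma ovl: assumes L: "joint_law P" and ov: "\<exists>n. pN P n > 0 \<and> 0 < XN P n \<and> XN P n < 1"
  shows "0 < eP P \<and> eP P < 1 \<and> A1P P < eP P"
proof -
  obtain n where n: "pN P n > 0" "0 < XN P n" "XN P n < 1" using ov by blast
  let ?a = "qc P True n" and ?b = "qc P False n"
  have p: "?a + ?b > 0" using n pN_ev[OF L] by simp
  have a: "?a > 0" using n(2) p XN_ev[OF L, of n] qc_nonneg[of P True n] by (simp add: zero_less_divide_iff)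
  have b: "?b > 0" using n(3) p XN_ev[OF L, of n] qc_nonneg[of P False n] by (simp add: divide_less_eq)
  have e1: "?a \<le> eP P" unfolding eP_def by (rule member_le_sum) (auto simp: qc_nonneg)
  have tb: "(\<Sum>n\<in>UNIV. qc P False n) = 1 - eP P" using tot_ev[OF L] by (simp add: sum.distrib eP_def)
  have e2: "?b \<le> 1 - eP P" unfolding tb[symmetric] by (rule member_le_sum) (auto simp: qc_nonneg)
  have XN1: "\<And>m. XN P m \<le> 1" using qc_nonneg XN_ev[OF L]
    by (metis add_increasing2 div_by_0 divide_le_eq_1 le_less linorder_not_less zero_le_one)
  have d: "eP P - A1P P = (\<Sum>m\<in>UNIV. qc P True m * (1 - XN P m))"
    unfolding eP_def A1P_def by (simp add: algebra_simps sum_subtractf)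
  have "?a * (1 - XN P n) \<le> (\<Sum>m\<in>UNIV. qc P True m * (1 - XN P m))"
    by (rule member_le_sum) (use XN1 qc_nonneg in \<open>auto intro!: mult_nonneg_nonneg\<close>)
  moreover have "?a * (1 - XN P n) > 0" using a n(3) by simp
  ultimately have "A1P P < eP P" using d by simp
  then show ?thesis using a b e1 e2 by simp
qed

lemma Qfacts: assumes L: "joint_law P" and LQ: "joint_law Q" and q: "qc Q = qc P"
  and s: "\<And>n. sc Q True n + sc Q False n = sc P True n + sc P False n"
  shows "same_observed P Q" "eP Q = eP P" "EYP Q = EYP P" "AYP Q = AYP P" "A1P Q = A1P P"
proof -
  have pn: "pN Q n = pN P n" for n using pN_ev[OF L] pN_ev[OF LQ] q by simp
  have xn: "XN Q n = XN P n" for n using XN_ev[OF L] XN_ev[OF LQ] q by simp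
  have yn: "YN Q n = YN P n" for n using YN_ev[OF L] YN_ev[OF LQ] q s by simp
  show "same_observed P Q" unfolding same_observed_def using pn xn yn by simp
  show "eP Q = eP P" unfolding eP_def q ..
  show "EYP Q = EYP P" unfolding EYP_def s ..
  show "AYP Q = AYP P" unfolding AYP_def q yn ..
  show "A1P Q = A1P P" unfolding A1P_def q xn ..
qed
lemma feas_P: assumes L: "joint_law P" and B: "cond_mean_bounds P yl yh" and y: "yl \<le> yh"
  shows "feas yl yh (qc P True n) (qc P False n) (sc P True n + sc P False n) (qc P True n * YN P n)"
    and "feas yl yh (qc P True n) (qc P False n) (sc P True n + sc P False n) ((qc P True n + qc P False n) * min (YN P n - yl * (1 - XN P n)) (yh * XN P n))"
    and "feas yl yh (qc P True n) (qc P False n) (sc P True n + sc P False n) ((sc P True n + sc P False n) - (qc P True n + qc P False n) * min (YN P n - yl * XN P n) (yh * (1 - XN P n)))"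
    and "sc P True n \<le> (qc P True n + qc P False n) * min (YN P n - yl * (1 - XN P n)) (yh * XN P n)"
    and "(sc P True n + sc P False n) - (qc P True n + qc P False n) * min (YN P n - yl * XN P n) (yh * (1 - XN P n)) \<le> sc P True n"
proof -
  have b1: "yl * qc P True n \<le> sc P True n" "sc P True n \<le> yh * qc P True n"
    using bounds_sc[OF L B, of True n] by auto
  have b0: "yl * qc P False n \<le> sc P False n" "sc P False n \<le> yh * qc P False n"
    using bounds_sc[OF L B, of False n] by auto
  note f = feas_n[OF qc_nonneg qc_nonneg y b1 b0]
  show "feas yl yh (qc P True n) (qc P False n) (sc P True n + sc P False n) (qc P True n * YN P n)"
    and "feas yl yh (qc P True n) (qc P False n) (sc P True n + sc P False n) ((qc P True n + qc P False n) * min (YN P n - yl * (1 - XN P n)) (yh * XN P n))"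
    and "feas yl yh (qc P True n) (qc P False n) (sc P True n + sc P False n) ((sc P True n + sc P False n) - (qc P True n + qc P False n) * min (YN P n - yl * XN P n) (yh * (1 - XN P n)))"
    and "sc P True n \<le> (qc P True n + qc P False n) * min (YN P n - yl * (1 - XN P n)) (yh * XN P n)"
    and "(sc P True n + sc P False n) - (qc P True n + qc P False n) * min (YN P n - yl * XN P n) (yh * (1 - XN P n)) \<le> sc P True n"
    unfolding XN_ev[OF L] YN_ev[OF L] using f by auto
qed

theorem proposition8:
  fixes P :: "('n::finite) outcome measure" and Ylow Yhigh :: real
  assumes law: "joint_law P"
    and overlap: "\<exists>n. pN P n > 0 \<and> 0 < XN P n \<and> XN P n < 1"
    and Yle: "Ylow \<le> Yhigh"
    and bounds: "cond_mean_bounds P Ylow Yhigh"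
    and varpos: "var P (XNrv P) > 0"
    and reinf: "deltaW P * deltaB P \<ge> 0"
  shows "(DER P \<ge> DNM P \<longrightarrow>
            0 \<le> DNM P \<and> DNM P \<le> Dgap P \<and> Dgap P \<le> min (DMOBp P Ylow Yhigh) (DER P))
       \<and> (DER P \<le> DNM P \<longrightarrow>
            max (DMOBm P Ylow Yhigh) (DER P) \<le> Dgap P \<and> Dgap P \<le> DNM P \<and> DNM P \<le> 0)
       \<and> (DER P \<ge> DNM P \<longrightarrow>
            (\<forall>d. DNM P \<le> d \<and> d \<le> min (DMOBp P Ylow Yhigh) (DER P) \<longrightarrow>
               (\<exists>Q :: 'n outcome measure. joint_law Q \<and> same_observed P Q \<and>
                  cond_mean_bounds Q Ylow Yhigh \<and> deltaW Q * deltaB Q \<ge> 0 \<and> Dgap Q = d)))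
       \<and> (DER P \<le> DNM P \<longrightarrow>
            (\<forall>d. max (DMOBm P Ylow Yhigh) (DER P) \<le> d \<and> d \<le> DNM P \<longrightarrow>
               (\<exists>Q :: 'n outcome measure. joint_law Q \<and> same_observed P Q \<and>
                  cond_mean_bounds Q Ylow Yhigh \<and> deltaW Q * deltaB Q \<ge> 0 \<and> Dgap Q = d)))"
proof -
  note L = law
  have O: "0 < eP P" "eP P < 1" "A1P P < eP P" using ovl[OF L overlap] by auto
  define e where "e = eP P"
  define E where "E = EYP P"
  define V where "V = e * (1 - e)"
  define W where "W = A1P P - e\<^sup>2"
  define C where "C = AYP P - e * E"
  define U where "U = (\<Sum>n\<in>UNIV. (qc P True n + qc P False n) * min (YN P n - Ylow * (1 - XN P n)) (Yhigh * XN P n))"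
  define U' where "U' = (\<Sum>n\<in>UNIV. (qc P True n + qc P False n) * min (YN P n - Ylow * XN P n) (Yhigh * (1 - XN P n)))"
  have V0: "V > 0" using O unfolding V_def e_def by simp
  have W0: "W > 0" using varpos unfolding W_def e_def var_XN[OF L] A1P_def eP_def .
  have WV: "W < V" using O unfolding W_def V_def e_def by (simp add: power2_eq_square algebra_simps)
  have hDg: "Dgap P = (S1P P - e * E) / V" unfolding V_def e_def E_def using Dgap_ev[OF L O(1,2)] .
  have hNM: "DNM P = C / V" unfolding V_def e_def E_def C_def using DNM_ev[OF L O(1,2)] .
  have hER: "DER P = C / W" unfolding W_def e_def E_def C_def using DER_ev[OF L] .
  have hB: "deltaB P = S1P P - AYP P" using deltaB_ev[OF L] .
  have hW: "deltaW P = C - Dgap P * W" unfolding W_def e_def E_def C_def using deltaW_ev2[OF L O(1,2)] .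
  have hMp: "DMOBp P Ylow Yhigh = (U - e * E) / V" unfolding U_def V_def e_def E_def using DMOBp_ev[OF L] .
  have hMm: "DMOBm P Ylow Yhigh = (E * (1 - e) - U') / V" unfolding U'_def V_def e_def E_def using DMOBm_ev[OF L] .
  have bd: "\<And>x n. Ylow * qc P x n \<le> sc P x n \<and> sc P x n \<le> Yhigh * qc P x n" using bounds_sc[OF L bounds] by blast
  note fn = feas_P[OF L bounds Yle]
  have DV: "Dgap P * V = C + deltaB P" unfolding hDg hB C_def using V0 by simp
  have S1U: "S1P P \<le> U" unfolding S1P_def U_def by (rule sum_mono) (rule fn(4))
  have S1U': "E - U' \<le> S1P P"
  proof -
    have "(\<Sum>n\<in>UNIV. (sc P True n + sc P False n) - (qc P True n + qc P False n) * min (YN P n - Ylow * XN P n) (Yhigh * (1 - XN P n)))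
       \<le> S1P P" unfolding S1P_def by (rule sum_mono) (rule fn(5))
    then show ?thesis unfolding E_def EYP_def U'_def by (simp add: sum_subtractf)
  qed
  have sumf1: "(\<Sum>n\<in>UNIV. qc P True n * YN P n) = AYP P" unfolding AYP_def ..
  have sumf2: "(\<Sum>n\<in>UNIV. (sc P True n + sc P False n) - (qc P True n + qc P False n) * min (YN P n - Ylow * XN P n) (Yhigh * (1 - XN P n))) = E - U'"
    unfolding E_def EYP_def U'_def by (simp add: sum_subtractf)
  have part1: "DER P \<ge> DNM P \<longrightarrow>
            0 \<le> DNM P \<and> DNM P \<le> Dgap P \<and> Dgap P \<le> min (DMOBp P Ylow Yhigh) (DER P)"
  proof
    assume "DER P \<ge> DNM P"
    then have C0: "0 \<le> C" using C_sign1[OF W0 WV] unfolding hER hNM by simp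
    have a: "C / V \<le> Dgap P \<and> Dgap P \<le> C / W" using alg_i[OF V0 W0 WV DV hW _ C0] reinf by (simp add: mult.commute)
    have b: "Dgap P \<le> DMOBp P Ylow Yhigh" unfolding hDg hMp using S1U V0 by (simp add: divide_right_mono)
    show "0 \<le> DNM P \<and> DNM P \<le> Dgap P \<and> Dgap P \<le> min (DMOBp P Ylow Yhigh) (DER P)"
      using a b C0 V0 unfolding hNM hER by simp
  qed
  have part2: "DER P \<le> DNM P \<longrightarrow>
            max (DMOBm P Ylow Yhigh) (DER P) \<le> Dgap P \<and> Dgap P \<le> DNM P \<and> DNM P \<le> 0"
  proof
    assume "DER P \<le> DNM P"
    then have C0: "C \<le> 0" using C_sign2[OF W0 WV] unfolding hER hNM by simp
    have DV': "(- Dgap P) * V = (- C) + (- deltaB P)" using DV by simp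
    have hW': "- deltaW P = (- C) - (- Dgap P) * W" using hW by simp
    have a: "(- C) / V \<le> - Dgap P \<and> - Dgap P \<le> (- C) / W"
      using alg_i[OF V0 W0 WV DV' hW' _ ] reinf C0 by (simp add: mult.commute)
    have b: "DMOBm P Ylow Yhigh \<le> Dgap P" unfolding hDg hMm using S1U' V0
      by (intro divide_right_mono) (auto simp: algebra_simps)
    show "max (DMOBm P Ylow Yhigh) (DER P) \<le> Dgap P \<and> Dgap P \<le> DNM P \<and> DNM P \<le> 0"
      using a b C0 V0 unfolding hNM hER by (simp add: divide_nonpos_pos)
  qed
  have mk: "\<exists>Q :: 'n outcome measure. joint_law Q \<and> same_observed P Q \<and>
                  cond_mean_bounds Q Ylow Yhigh \<and> deltaW Q * deltaB Q \<ge> 0 \<and> Dgap Q = d"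
    if F1: "\<And>n. feas Ylow Yhigh (qc P True n) (qc P False n) (sc P True n + sc P False n) (f1 n)"
    and F2: "\<And>n. feas Ylow Yhigh (qc P True n) (qc P False n) (sc P True n + sc P False n) (f2 n)"
    and T1: "(\<Sum>n\<in>UNIV. f1 n) \<le> d * V + e * E" and T2: "d * V + e * E \<le> (\<Sum>n\<in>UNIV. f2 n)"
    and pr: "0 \<le> (C - d * W) * (d * V - C)"
    for f1 f2 d
  proof -
    obtain Q where Q: "joint_law Q" "qc Q = qc P" "\<forall>n. sc Q True n + sc Q False n = sc P True n + sc P False n"
      "S1P Q = d * V + e * E" "cond_mean_bounds Q Ylow Yhigh"
      using interp[OF L F1 F2 T1 T2] by blast
    note QF = Qfacts[OF L Q(1) Q(2) spec[OF Q(3)]]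
    have OQ: "0 < eP Q" "eP Q < 1" using O QF by auto
    have dg: "Dgap Q = d" using Dgap_ev[OF Q(1) OQ] unfolding QF Q(4) e_def[symmetric] E_def[symmetric]
      V_def[symmetric] using V0 by simp
    have dB: "deltaB Q = d * V - C" unfolding deltaB_ev[OF Q(1)] QF Q(4) C_def by simp
    have dW: "deltaW Q = C - d * W" unfolding deltaW_ev2[OF Q(1) OQ] QF dg C_def W_def e_def E_def by simp
    show ?thesis using Q QF dg dB dW pr by auto
  qed
  have part3: "DER P \<ge> DNM P \<longrightarrow>
            (\<forall>d. DNM P \<le> d \<and> d \<le> min (DMOBp P Ylow Yhigh) (DER P) \<longrightarrow>
               (\<exists>Q :: 'n outcome measure. joint_law Q \<and> same_observed P Q \<and>
                  cond_mean_bounds Q Ylow Yhigh \<and> deltaW Q * deltaB Q \<ge> 0 \<and> Dgap Q = d))"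
  proof (intro impI allI)
    fix d assume d: "DNM P \<le> d \<and> d \<le> min (DMOBp P Ylow Yhigh) (DER P)"
    have d1: "C \<le> d * V" using d V0 unfolding hNM by (simp add: divide_le_eq)
    have d2: "d * V \<le> U - e * E" using d V0 unfolding hMp by (simp add: le_divide_eq)
    have d3: "d * W \<le> C" using d W0 unfolding hER by (simp add: le_divide_eq)
    show "\<exists>Q :: 'n outcome measure. joint_law Q \<and> same_observed P Q \<and>
                  cond_mean_bounds Q Ylow Yhigh \<and> deltaW Q * deltaB Q \<ge> 0 \<and> Dgap Q = d"
    proof (rule mk[of "\<lambda>n. qc P True n * YN P n" "\<lambda>n. (qc P True n + qc P False n) * min (YN P n - Ylow * (1 - XN P n)) (Yhigh * XN P n)"])
      show "\<And>n. feas Ylow Yhigh (qc P True n) (qc P False n) (sc P True n + sc P False n) (qc P True n * YN P n)"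
        by (rule fn(1))
      show "\<And>n. feas Ylow Yhigh (qc P True n) (qc P False n) (sc P True n + sc P False n) ((qc P True n + qc P False n) * min (YN P n - Ylow * (1 - XN P n)) (Yhigh * XN P n))"
        by (rule fn(2))
      show "(\<Sum>n\<in>UNIV. qc P True n * YN P n) \<le> d * V + e * E" using d1 unfolding sumf1 C_def by simp
      show "d * V + e * E \<le> (\<Sum>n\<in>UNIV. (qc P True n + qc P False n) * min (YN P n - Ylow * (1 - XN P n)) (Yhigh * XN P n))"
        using d2 unfolding U_def by simp
      show "0 \<le> (C - d * W) * (d * V - C)" using d1 d3 by simp
    qed
  qed
  have part4: "DER P \<le> DNM P \<longrightarrow>
            (\<forall>d. max (DMOBm P Ylow Yhigh) (DER P) \<le> d \<and> d \<le> DNM P \<longrightarrow>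
               (\<exists>Q :: 'n outcome measure. joint_law Q \<and> same_observed P Q \<and>
                  cond_mean_bounds Q Ylow Yhigh \<and> deltaW Q * deltaB Q \<ge> 0 \<and> Dgap Q = d))"
  proof (intro impI allI)
    fix d assume d: "max (DMOBm P Ylow Yhigh) (DER P) \<le> d \<and> d \<le> DNM P"
    have d1: "d * V \<le> C" using d V0 unfolding hNM by (simp add: le_divide_eq)
    have d2: "E * (1 - e) - U' \<le> d * V" using d V0 unfolding hMm by (simp add: divide_le_eq)
    have d3: "C \<le> d * W" using d W0 unfolding hER by (simp add: divide_le_eq)
    show "\<exists>Q :: 'n outcome measure. joint_law Q \<and> same_observed P Q \<and>
                  cond_mean_bounds Q Ylow Yhigh \<and> deltaW Q * deltaB Q \<ge> 0 \<and> Dgap Q = d"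
    proof (rule mk[of "\<lambda>n. (sc P True n + sc P False n) - (qc P True n + qc P False n) * min (YN P n - Ylow * XN P n) (Yhigh * (1 - XN P n))" "\<lambda>n. qc P True n * YN P n"])
      show "\<And>n. feas Ylow Yhigh (qc P True n) (qc P False n) (sc P True n + sc P False n) (qc P True n * YN P n)"
        by (rule fn(1))
      show "\<And>n. feas Ylow Yhigh (qc P True n) (qc P False n) (sc P True n + sc P False n) ((sc P True n + sc P False n) - (qc P True n + qc P False n) * min (YN P n - Ylow * XN P n) (Yhigh * (1 - XN P n)))"
        by (rule fn(3))
      show "d * V + e * E \<le> (\<Sum>n\<in>UNIV. qc P True n * YN P n)" using d1 unfolding sumf1 C_def by simp
      show "(\<Sum>n\<in>UNIV. (sc P True n + sc P False n) - (qc P True n + qc P False n) * min (YN P n - Ylow * XN P n) (Yhigh * (1 - XN P n))) \<le> d * V + e * E"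
        using d2 unfolding sumf2 by (simp add: algebra_simps)
      show "0 \<le> (C - d * W) * (d * V - C)" using d1 d3 by (simp add: mult_nonpos_nonpos)
    qed
  qed
  show ?thesis using part1 part2 part3 part4 by blast
qed


end
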